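(* There exists a constant $c>0$ such that for every $n$ that is a perfect square there is a set $P$ of $n$ points in the plane such that every Hamiltonian path $\Pi$ of $P$ satisfies $W(\Pi)\ge c\sqrt{n}\cdot W(K_P)$, where $K_P$ is the complete Euclidean graph on $P$. That is, the Wiener index of any Hamiltonian path of $P$ is at least $\Theta(\sqrt{n})$ times the Wiener index of the complete Euclidean graph over $P$.
   Context: For a connected graph $G$ on vertex set $P$ whose edges $(p,q)$ have weight equal to the Euclidean distance $|pq|$, $\delta_G(p,q)$ denotes the weight of a shortest path between $p$ and $q$ in $G$, and the Wiener index is $W(G)=\sum_{\{p,q\}\subseteq P}\delta_G(p,q)$. The complete Euclidean graph $K_P$ has all edges between points of $P$, so $W(K_P)=\sum_{\{p,q\}\subseteq P}|pq|$. A Hamiltonian path of $P$ is a path with straight-line edges visiting every point of $P$ exactly once. *)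

theory Defs
  imports "HOL-Analysis.Analysis"
begin

type_synonym point = "real^2"

text \<open>A geometric graph on a point set is given by its (undirected) edge set E,
  a set of pairs of points; an edge (p,q) has weight dist p q.\<close>

definition is_walk :: "(point \<times> point) set \<Rightarrow> point \<Rightarrow> point \<Rightarrow> point list \<Rightarrow> bool" where
  "is_walk E p q ws \<longleftrightarrow> ws \<noteq> [] \<and> hd ws = p \<and> last ws = q \<and>
     (\<forall>i < length ws - 1. (ws ! i, ws ! Suc i) \<in> E \<or> (ws ! Suc i, ws ! i) \<in> E)"

definition walk_weight :: "point list \<Rightarrow> real" where
  "walk_weight ws = (\<Sum>i < length ws - 1. dist (ws ! i) (ws ! Suc i))"

definition sp_dist :: "(point \<times> point) set \<Rightarrow> point \<Rightarrow> point \<Rightarrow> real" where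
  "sp_dist E p q = Inf (walk_weight ` {ws. is_walk E p q ws})"

text \<open>Wiener index: sum over unordered pairs {p,q} of distinct vertices
  (each unordered pair counted once: ordered pairs halved; diagonal terms are 0).\<close>
definition wiener :: "point set \<Rightarrow> (point \<times> point) set \<Rightarrow> real" where
  "wiener V E = (\<Sum>p\<in>V. \<Sum>q\<in>V - {p}. sp_dist E p q) / 2"

definition complete_edges :: "point set \<Rightarrow> (point \<times> point) set" where
  "complete_edges P = {(p, q). p \<in> P \<and> q \<in> P \<and> p \<noteq> q}"

definition path_edges :: "point list \<Rightarrow> (point \<times> point) set" where
  "path_edges ps = {(ps ! i, ps ! Suc i) | i. Suc i < length ps}"

definition hamiltonian_path :: "point set \<Rightarrow> point list \<Rightarrow> bool" where
  "hamiltonian_path P ps \<longleftrightarrow> distinct ps \<and> set ps = P"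

end

theory Submission
  imports Defs
begin

definition grid :: "nat \<Rightarrow> point set" where
  "grid k = (\<lambda>(a,b). vector [real a, real b]) ` ({..<k} \<times> {..<k})"

lemma walk_lip:
  assumes lip: "\<And>a b. (a,b) \<in> E \<Longrightarrow> \<bar>\<phi> a - \<phi> b\<bar> \<le> dist a b"
    and w: "is_walk E p q ws"
  shows "\<bar>\<phi> p - \<phi> q\<bar> \<le> walk_weight ws"
proof -
  let ?m = "length ws - 1"
  have ne: "ws \<noteq> []" and hp: "hd ws = p" and lq: "last ws = q"
    and ed: "\<And>i. i < ?m \<Longrightarrow> (ws ! i, ws ! Suc i) \<in> E \<or> (ws ! Suc i, ws ! i) \<in> E"
    using w unfolding is_walk_def by auto
  have p0: "p = ws ! 0" using ne hp by (simp add: hd_conv_nth)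
  have qm: "q = ws ! ?m" using ne lq by (simp add: last_conv_nth)
  have "\<phi> p - \<phi> q = (\<Sum>i<?m. \<phi> (ws ! i) - \<phi> (ws ! Suc i))"
    using sum_lessThan_telescope'[of "\<lambda>i. \<phi> (ws ! i)" ?m] p0 qm by simp
  hence "\<bar>\<phi> p - \<phi> q\<bar> \<le> (\<Sum>i<?m. \<bar>\<phi> (ws ! i) - \<phi> (ws ! Suc i)\<bar>)"
    by (metis sum_abs)
  also have "\<dots> \<le> (\<Sum>i<?m. dist (ws ! i) (ws ! Suc i))"
  proof (rule sum_mono)
    fix i assume "i \<in> {..<?m}"
    then show "\<bar>\<phi> (ws ! i) - \<phi> (ws ! Suc i)\<bar> \<le> dist (ws ! i) (ws ! Suc i)"
      using ed[of i] lip[of "ws ! i" "ws ! Suc i"] lip[of "ws ! Suc i" "ws ! i"]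
      by (auto simp: abs_minus_commute dist_commute)
  qed
  finally show ?thesis unfolding walk_weight_def .
qed

lemma walk_weight_nonneg: "walk_weight ws \<ge> 0"
  unfolding walk_weight_def by (simp add: sum_nonneg)

lemma sp_dist_le:
  assumes "is_walk E p q ws" shows "sp_dist E p q \<le> walk_weight ws"
  unfolding sp_dist_def
proof (rule cInf_lower)
  show "walk_weight ws \<in> walk_weight ` {ws. is_walk E p q ws}" using assms by auto
  show "bdd_below (walk_weight ` {ws. is_walk E p q ws})"
    by (rule bdd_belowI[where m=0]) (auto simp: walk_weight_nonneg)
qed

lemma sp_dist_ge:
  assumes lip: "\<And>a b. (a,b) \<in> E \<Longrightarrow> \<bar>\<phi> a - \<phi> b\<bar> \<le> dist a b"
    and w: "is_walk E p q ws"
  shows "\<bar>\<phi> p - \<phi> q\<bar> \<le> sp_dist E p q"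
  unfolding sp_dist_def
  by (rule cInf_greatest) (use w walk_lip[OF lip] in auto)

lemma path_walk_fwd:
  assumes "i \<le> j" "j < length ps"
  shows "is_walk (path_edges ps) (ps ! i) (ps ! j) (map (\<lambda>t. ps ! t) [i..<Suc j])"
proof -
  let ?ws = "map (\<lambda>t. ps ! t) [i..<Suc j]"
  have len: "length ?ws = Suc j - i" using assms by simp
  have nth: "\<And>t. t < Suc j - i \<Longrightarrow> ?ws ! t = ps ! (i + t)"
    using assms by (simp del: upt_Suc)
  have ne: "?ws \<noteq> []" using assms by simp
  have "hd ?ws = ps ! i" using ne nth[of 0] assms by (simp add: hd_conv_nth)
  moreover have "last ?ws = ps ! j" using ne nth[of "j - i"] assms
    by (simp add: last_conv_nth)
  moreover have "\<forall>t < length ?ws - 1. (?ws ! t, ?ws ! Suc t) \<in> path_edges ps"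
  proof (intro allI impI)
    fix t assume t: "t < length ?ws - 1"
    hence "?ws ! t = ps ! (i + t)" "?ws ! Suc t = ps ! Suc (i + t)" using nth len by auto
    moreover have "Suc (i + t) < length ps" using t assms by simp
    ultimately show "(?ws ! t, ?ws ! Suc t) \<in> path_edges ps"
      unfolding path_edges_def by auto
  qed
  ultimately show ?thesis using ne unfolding is_walk_def by auto
qed

lemma walk_rev:
  assumes "is_walk E p q ws" shows "is_walk E q p (rev ws)"
proof -
  have ne: "ws \<noteq> []" and e: "\<forall>i < length ws - 1. (ws ! i, ws ! Suc i) \<in> E \<or> (ws ! Suc i, ws ! i) \<in> E"
    and "hd ws = p" "last ws = q"
    using assms unfolding is_walk_def by auto
  moreover have "\<forall>i < length ws - 1. (rev ws ! i, rev ws ! Suc i) \<in> E \<or> (rev ws ! Suc i, rev ws ! i) \<in> E"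
  proof (intro allI impI)
    fix i assume i: "i < length ws - 1"
    let ?j = "length ws - 2 - i"
    have e1: "length ws - Suc i = Suc ?j" using i by arith
    have e2: "length ws - Suc (Suc i) = ?j" using i by arith
    have "rev ws ! i = ws ! Suc ?j" using i e1 by (simp add: rev_nth)
    moreover have "rev ws ! Suc i = ws ! ?j" using i e2 by (simp add: rev_nth)
    moreover have "?j < length ws - 1" using i by simp
    ultimately show "(rev ws ! i, rev ws ! Suc i) \<in> E \<or> (rev ws ! Suc i, rev ws ! i) \<in> E"
      using e by auto
  qed
  ultimately show ?thesis unfolding is_walk_def by (simp add: hd_rev last_rev)
qed

lemma path_walk:
  assumes "i < length ps" "j < length ps"
  shows "\<exists>ws. is_walk (path_edges ps) (ps ! i) (ps ! j) ws"
proof (cases "i \<le> j")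
  case True then show ?thesis using path_walk_fwd assms by blast
next
  case False then show ?thesis using path_walk_fwd[of j i ps] walk_rev assms by fastforce
qed

definition idx :: "point list \<Rightarrow> point \<Rightarrow> nat" where
  "idx ps x = (LEAST i. ps ! i = x)"

lemma idx_nth: assumes "distinct ps" "i < length ps" shows "idx ps (ps ! i) = i"
  unfolding idx_def
proof (rule Least_equality)
  fix j assume "ps ! j = ps ! i"
  then show "i \<le> j" using assms nth_eq_iff_index_eq[of ps j i]
    by (cases "j < length ps") auto
qed simp

lemma grid_finite: "finite (grid k)" unfolding grid_def by simp

lemma grid_card: "card (grid k) = k^2"
proof -
  have "inj_on (\<lambda>(a,b). vector [real a, real b] :: point) ({..<k} \<times> {..<k})"
  proof (rule inj_onI, clarsimp)
    fix a b a' b' :: nat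
    assume "(vector [real a, real b] :: point) = vector [real a', real b']"
    hence "(vector [real a, real b] :: point) $ 1 = (vector [real a', real b'] :: point) $ 1"
      "(vector [real a, real b] :: point) $ 2 = (vector [real a', real b'] :: point) $ 2" by simp_all
    then show "a = a' \<and> b = b'" by simp
  qed
  then show ?thesis unfolding grid_def by (simp add: card_image power2_eq_square)
qed

lemma grid_dist_ge:
  assumes "x \<in> grid k" "y \<in> grid k" "x \<noteq> y" shows "1 \<le> dist x y"
proof -
  obtain a b a' b' :: nat where x: "x = vector [real a, real b]" and y: "y = vector [real a', real b']"
    using assms unfolding grid_def by auto
  have c1: "\<bar>(x - y) $ 1\<bar> \<le> dist x y" and c2: "\<bar>(x - y) $ 2\<bar> \<le> dist x y"
    unfolding dist_norm by (rule component_le_norm_cart)+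
  have "a \<noteq> a' \<or> b \<noteq> b'" using assms x y by auto
  then show ?thesis
  proof
    assume "a \<noteq> a'"
    hence "1 \<le> \<bar>real a - real a'\<bar>" by linarith
    then show ?thesis using c1 x y by simp
  next
    assume "b \<noteq> b'"
    hence "1 \<le> \<bar>real b - real b'\<bar>" by linarith
    then show ?thesis using c2 x y by simp
  qed
qed

lemma grid_dist_le:
  assumes "x \<in> grid k" "y \<in> grid k" shows "dist x y \<le> 2 * real k"
proof -
  obtain a b a' b' :: nat where x: "x = vector [real a, real b]" and y: "y = vector [real a', real b']"
    and ab: "a < k" "b < k" "a' < k" "b' < k"
    using assms unfolding grid_def by auto
  have "dist x y \<le> \<bar>(x - y) $ 1\<bar> + \<bar>(x - y) $ 2\<bar>"
    using norm_le_l1_cart[of "x - y"] by (simp add: dist_norm sum_2)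
  also have "\<dots> = \<bar>real a - real a'\<bar> + \<bar>real b - real b'\<bar>" using x y by simp
  also have "\<dots> \<le> 2 * real k" using ab by linarith
  finally show ?thesis .
qed

lemma gauss_real: "(\<Sum>j<n. real j) = real n * (real n - 1) / 2"
  by (induct n) (auto simp: field_simps)

lemma sum_abs_row: "(\<Sum>j<n. \<bar>real n - real j\<bar>) = real n * (real n + 1) / 2"
proof -
  have "(\<Sum>j<n. \<bar>real n - real j\<bar>) = (\<Sum>j<n. real n - real j)"
    by (rule sum.cong) auto
  also have "\<dots> = real n * real n - real n * (real n - 1) / 2"
    by (simp add: sum_subtractf gauss_real)
  finally show ?thesis by (simp add: field_simps)
qed

lemma sum_abs_sq: "(\<Sum>i<n. \<Sum>j<n. \<bar>real i - real j\<bar>) = (real n ^ 3 - real n) / 3"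
proof (induct n)
  case 0 then show ?case by simp
next
  case (Suc n)
  have "(\<Sum>i<Suc n. \<Sum>j<Suc n. \<bar>real i - real j\<bar>)
      = (\<Sum>i<n. \<Sum>j<n. \<bar>real i - real j\<bar>) + (\<Sum>i<n. \<bar>real i - real n\<bar>) + (\<Sum>j<n. \<bar>real n - real j\<bar>)"
    by (simp add: sum.distrib)
  also have "(\<Sum>i<n. \<bar>real i - real n\<bar>) = (\<Sum>j<n. \<bar>real n - real j\<bar>)"
    by (simp add: abs_minus_commute)
  finally show ?case using Suc sum_abs_row[of n] by (simp add: field_simps power3_eq_cube)
qed

lemma cube_id: "(x::real) ^ 3 - x = x * (x - 1) * (x + 1)"
  by (simp add: power3_eq_cube algebra_simps)

lemma wiener_path_lower:
  assumes hp: "hamiltonian_path (grid k) ps"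
  shows "wiener (grid k) (path_edges ps) \<ge> (real (k^2) ^ 3 - real (k^2)) / 6"
proof -
  let ?P = "grid k"
  let ?n = "length ps"
  define \<phi> where "\<phi> x = real (idx ps x)" for x
  have dist: "distinct ps" and setp: "set ps = ?P" using hp unfolding hamiltonian_path_def by auto
  have len: "?n = k^2" using distinct_card[OF dist] setp grid_card by simp
  have lip: "\<bar>\<phi> a - \<phi> b\<bar> \<le> dist a b" if e: "(a,b) \<in> path_edges ps" for a b
  proof -
    obtain i where a: "a = ps ! i" and b: "b = ps ! Suc i" and i: "Suc i < ?n"
      using e unfolding path_edges_def by blast
    have "\<phi> a = real i" "\<phi> b = real (Suc i)" using a b i idx_nth[OF dist] unfolding \<phi>_def by auto
    moreover have "a \<noteq> b" using a b i dist nth_eq_iff_index_eq[of ps i "Suc i"] by auto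
    moreover have "a \<in> ?P" "b \<in> ?P" using a b i setp nth_mem[of i ps] nth_mem[of "Suc i" ps] by auto
    ultimately show ?thesis using grid_dist_ge[of a k b] by simp
  qed
  have sp: "\<bar>\<phi> p - \<phi> q\<bar> \<le> sp_dist (path_edges ps) p q" if "p \<in> ?P" "q \<in> ?P" for p q
  proof -
    have "p \<in> set ps" "q \<in> set ps" using that setp by auto
    then obtain i j where ij: "i < ?n" "j < ?n" and pq: "ps ! i = p" "ps ! j = q"
      unfolding in_set_conv_nth by blast
    obtain ws where "is_walk (path_edges ps) (ps ! i) (ps ! j) ws" using path_walk[OF ij] by blast
    then have "is_walk (path_edges ps) p q ws" using pq by simp
    then show ?thesis using sp_dist_ge[of "path_edges ps" \<phi>] lip by blast
  qed
  have "(\<Sum>p\<in>?P. \<Sum>q\<in>?P - {p}. sp_dist (path_edges ps) p q) \<ge> (\<Sum>p\<in>?P. \<Sum>q\<in>?P - {p}. \<bar>\<phi> p - \<phi> q\<bar>)"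
    by (intro sum_mono) (use sp in auto)
  also have "(\<Sum>p\<in>?P. \<Sum>q\<in>?P - {p}. \<bar>\<phi> p - \<phi> q\<bar>) = (\<Sum>p\<in>?P. \<Sum>q\<in>?P. \<bar>\<phi> p - \<phi> q\<bar>)"
  proof (rule sum.cong[OF refl])
    fix p assume "p \<in> ?P"
    then show "(\<Sum>q\<in>?P - {p}. \<bar>\<phi> p - \<phi> q\<bar>) = (\<Sum>q\<in>?P. \<bar>\<phi> p - \<phi> q\<bar>)"
      using sum.remove[OF grid_finite[of k], of p "\<lambda>q. \<bar>\<phi> p - \<phi> q\<bar>"] by simp
  qed
  also have "(\<Sum>p\<in>?P. \<Sum>q\<in>?P. \<bar>\<phi> p - \<phi> q\<bar>)
     = (\<Sum>i<?n. \<Sum>j<?n. \<bar>real i - real j\<bar>)"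
  proof -
    have eqP: "?P = (!) ps ` {..<?n}" using nth_image[of "length ps" ps] setp by (simp add: atLeast0LessThan)
    have inj: "inj_on ((!) ps) {..<?n}" using inj_on_nth[OF dist] by auto
    show ?thesis unfolding eqP
      by (simp add: sum.reindex[OF inj] \<phi>_def idx_nth[OF dist])
  qed
  also have "\<dots> = (real (k^2) ^ 3 - real (k^2)) / 3" using sum_abs_sq len by simp
  finally show ?thesis unfolding wiener_def by simp
qed

lemma wiener_complete_upper:
  "wiener (grid k) (complete_edges (grid k)) \<le> real (k^2) * (real (k^2) - 1) * real k"
proof -
  let ?P = "grid k"
  have b: "sp_dist (complete_edges ?P) p q \<le> 2 * real k" if "p \<in> ?P" "q \<in> ?P" "p \<noteq> q" for p q
  proof -
    have "is_walk (complete_edges ?P) p q [p, q]"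
      using that unfolding is_walk_def complete_edges_def by auto
    hence "sp_dist (complete_edges ?P) p q \<le> walk_weight [p, q]" by (rule sp_dist_le)
    also have "walk_weight [p, q] = dist p q" unfolding walk_weight_def by simp
    finally show ?thesis using grid_dist_le[OF that(1,2)] by simp
  qed
  have "(\<Sum>p\<in>?P. \<Sum>q\<in>?P - {p}. sp_dist (complete_edges ?P) p q)
       \<le> (\<Sum>p\<in>?P. (real (k^2) - 1) * (2 * real k))"
  proof (rule sum_mono)
    fix p assume p: "p \<in> ?P"
    have "(\<Sum>q\<in>?P - {p}. sp_dist (complete_edges ?P) p q) \<le> real (card (?P - {p})) * (2 * real k)"
      using sum_bounded_above[of "?P - {p}" "\<lambda>q. sp_dist (complete_edges ?P) p q" "2 * real k"] b p
      by auto
    also have "real (card (?P - {p})) = real (k^2) - 1"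
    proof -
      have "k^2 > 0" using p grid_finite[of k] grid_card[of k] card_gt_0_iff[of ?P] by auto
      then show ?thesis using p grid_finite[of k] grid_card[of k] by (simp add: of_nat_diff)
    qed
    finally show "(\<Sum>q\<in>?P - {p}. sp_dist (complete_edges ?P) p q) \<le> (real (k^2) - 1) * (2 * real k)" .
  qed
  also have "\<dots> = real (k^2) * ((real (k^2) - 1) * (2 * real k))" by (simp add: grid_card)
  finally show ?thesis unfolding wiener_def by simp
qed

theorem theorem6:
  "\<exists>c::real. c > 0 \<and>
     (\<forall>n::nat. (\<exists>k::nat. n = k\<^sup>2) \<longrightarrow>
        (\<exists>P :: point set. finite P \<and> card P = n \<and>
           (\<forall>ps. hamiltonian_path P ps \<longrightarrow>
              wiener P (path_edges ps) \<ge> c * sqrt (real n) * wiener P (complete_edges P))))"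
proof (intro exI[of _ "1/6"] conjI allI impI)
  show "(0::real) < 1/6" by simp
  fix n :: nat assume "\<exists>k. n = k\<^sup>2"
  then obtain k where n: "n = k^2" by blast
  show "\<exists>P :: point set. finite P \<and> card P = n \<and>
           (\<forall>ps. hamiltonian_path P ps \<longrightarrow>
              wiener P (path_edges ps) \<ge> 1/6 * sqrt (real n) * wiener P (complete_edges P))"
  proof (intro exI[of _ "grid k"] conjI allI impI)
    show "finite (grid k)" by (rule grid_finite)
    show "card (grid k) = n" using grid_card n by simp
    fix ps assume hp: "hamiltonian_path (grid k) ps"
    have sq: "sqrt (real n) = real k" using n by simp
    have U: "wiener (grid k) (complete_edges (grid k)) \<le> real (k^2) * (real (k^2) - 1) * real k"
      by (rule wiener_complete_upper)
    have L: "wiener (grid k) (path_edges ps) \<ge> (real (k^2) ^ 3 - real (k^2)) / 6"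
      by (rule wiener_path_lower[OF hp])
    have "1/6 * real k * wiener (grid k) (complete_edges (grid k))
        \<le> 1/6 * real k * (real (k^2) * (real (k^2) - 1) * real k)"
      using U by (intro mult_left_mono) auto
    also have "\<dots> \<le> (real (k^2) ^ 3 - real (k^2)) / 6"
    proof -
      let ?m = "real (k^2)"
      have m: "?m = real k * real k" by (simp add: power2_eq_square)
      have "?m * (?m - 1) * ?m \<le> ?m * (?m - 1) * (?m + 1)"
      proof (cases "k = 0")
        case False
        then have "?m \<ge> 1" by simp
        then show ?thesis by (intro mult_left_mono) auto
      qed simp
      moreover have "real k * (?m * (?m - 1) * real k) = ?m * (?m - 1) * ?m" using m by (metis mult.commute mult.left_commute)
      moreover have "?m ^ 3 - ?m = ?m * (?m - 1) * (?m + 1)" by (rule cube_id)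
      ultimately show ?thesis by (simp only: mult.assoc)
    qed
    finally show "wiener (grid k) (path_edges ps) \<ge> 1/6 * sqrt (real n) * wiener (grid k) (complete_edges (grid k))"
      using L unfolding sq by linarith
  qed
qed

end
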